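(* Let $\mu$ be a cardinal with $\aleph_0<\kappa=\mathrm{cf}(\mu)<\mu$, $\lambda=\mu^+$, and let $\mu=\sum_{i<\kappa}\mu_i$ where $\langle\mu_i:i<\kappa\rangle$ is an increasing continuous sequence of cardinals with $\mu_0>\kappa$. Then there is a sequence $\langle a^\alpha_i: i<\kappa,\alpha<\lambda\rangle$ such that for every $\alpha<\lambda$ the sets $a^\alpha_i$ ($i<\kappa$) are subsets of $\alpha$, $\subseteq$-increasing in $i$, with $|a^\alpha_i|\le\mu_i$, and such that for every function $f:\lambda\to\lambda$, letting $A^f_i=\{\alpha<\lambda:\alpha=\sup\{\zeta\in a^\alpha_i: f(\zeta)\in a^\alpha_i\}\}$, we have: (A) the sets $A^f_i$ are $\subseteq$-increasing in $i$; (B) $\{\delta<\lambda:\mathrm{cf}(\delta)\ne\kappa\}\setminus\bigcup_{i<\kappa}A^f_i$ is non-stationary in $\lambda$; (C) if $\gamma<\lambda$ with $\aleph_0<\mathrm{cf}(\gamma)\le\kappa$ (in particular if $\mathrm{cf}(\gamma)=\kappa$), $i<\kappa$, and $A^f_i$ reflects at $\gamma$, then $\gamma\in A^f_i$; (C') consequently, letting $S_f=S^\lambda_\kappa\setminus\bigcup_{i<\kappa}A^f_i$, for no $i<\kappa$ does $A^f_i$ reflect at any $\delta\in S_f$; (D) there is a non-stationary set $N\subseteq\lambda$ such that $S_f\setminus N\in{\cal I}[\lambda,\kappa)$.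
   Context: $S^\lambda_\kappa=\{\delta<\lambda:\mathrm{cf}(\delta)=\kappa\}$. A set $A\subseteq\lambda$ reflects at $\gamma<\lambda$ if $\mathrm{cf}(\gamma)>\aleph_0$ and $A\cap\gamma$ is stationary in $\gamma$. ${\cal I}[\lambda,\kappa)$ is the family of all $A\subseteq\lambda$ for which there is a function $h:\lambda\to\kappa$ such that for every $\delta\in A\cap S^\lambda_\kappa$ there is a club $C$ of $\delta$ with $h\restriction C$ strictly increasing. *)

theory Defs
  imports Main "HOL-Library.Countable_Set"
begin

unbundle cardinal_syntax

text \<open>Ordinals below lambda are modelled as elements of a well-ordered type 'a whose
order type is lambda (see the assumptions of the theorem). Cardinals below lambda are
initial ordinals, i.e. elements of 'a.\<close>

definition seg :: "'a::wellorder \<Rightarrow> 'a set" where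
  "seg x = {z. z < x}"

definition ord0 :: "'a::wellorder" where
  "ord0 = (LEAST x. True)"

definition is_limit :: "'a::wellorder \<Rightarrow> bool" where
  "is_limit j \<longleftrightarrow> j \<noteq> ord0 \<and> (\<forall>b<j. \<exists>c. b < c \<and> c < j)"

definition is_cardinal :: "'a::wellorder \<Rightarrow> bool" where
  "is_cardinal x \<longleftrightarrow> (\<forall>y<x. card_of (seg y) <o card_of (seg x))"

definition cofinal_in :: "'a::wellorder set \<Rightarrow> 'a \<Rightarrow> bool" where
  "cofinal_in C d \<longleftrightarrow> C \<subseteq> seg d \<and> (\<forall>b<d. \<exists>c\<in>C. b \<le> c)"

definition cf :: "'a::wellorder \<Rightarrow> 'a" where
  "cf d = (LEAST t. \<exists>C. cofinal_in C d \<and> card_of C =o card_of (seg t))"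

definition is_sup_of :: "'a::wellorder \<Rightarrow> 'a set \<Rightarrow> bool" where
  "is_sup_of d X \<longleftrightarrow> (\<forall>b<d. \<exists>z\<in>X. b < z)"

definition club_below :: "'a::wellorder \<Rightarrow> 'a set \<Rightarrow> bool" where
  "club_below g C \<longleftrightarrow> C \<subseteq> seg g \<and> (\<forall>b<g. \<exists>c\<in>C. b < c)
     \<and> (\<forall>d<g. (\<exists>c\<in>C. c < d) \<and> (\<forall>b<d. \<exists>c\<in>C. b < c \<and> c < d) \<longrightarrow> d \<in> C)"

definition stationary_below :: "'a::wellorder \<Rightarrow> 'a set \<Rightarrow> bool" where
  "stationary_below g A \<longleftrightarrow> A \<subseteq> seg g \<and> (\<forall>C. club_below g C \<longrightarrow> A \<inter> C \<noteq> {})"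

definition club :: "'a::wellorder set \<Rightarrow> bool" where
  "club C \<longleftrightarrow> (\<forall>b. \<exists>c\<in>C. b < c)
     \<and> (\<forall>d. (\<exists>c\<in>C. c < d) \<and> (\<forall>b<d. \<exists>c\<in>C. b < c \<and> c < d) \<longrightarrow> d \<in> C)"

definition stationary :: "'a::wellorder set \<Rightarrow> bool" where
  "stationary A \<longleftrightarrow> (\<forall>C. club C \<longrightarrow> A \<inter> C \<noteq> {})"

definition reflects :: "'a::wellorder set \<Rightarrow> 'a \<Rightarrow> bool" where
  "reflects A g \<longleftrightarrow> \<not> countable (seg (cf g)) \<and> stationary_below g (A \<inter> seg g)"

definition Scof :: "'a::wellorder \<Rightarrow> 'a set" where
  "Scof k = {d. cf d = k}"

definition Ideal_I :: "'a::wellorder \<Rightarrow> 'a set set" where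
  "Ideal_I k = {A. \<exists>h::'a \<Rightarrow> 'a. (\<forall>x. h x < k) \<and>
      (\<forall>d\<in>A \<inter> Scof k. \<exists>C. club_below d C \<and> strict_mono_on C h)}"

definition Aset :: "('a::wellorder \<Rightarrow> 'a \<Rightarrow> 'a set) \<Rightarrow> ('a \<Rightarrow> 'a) \<Rightarrow> 'a \<Rightarrow> 'a set" where
  "Aset a f i = {al. is_sup_of al {z \<in> a al i. f z \<in> a al i}}"

end

theory Submission imports Defs "HOL-Library.Countable_Set_Type" begin

lemma wo_le: "Well_order {(x::'a::wellorder, y). x \<le> y}"
  unfolding well_order_on_def linear_order_on_def partial_order_on_def preorder_on_def
    refl_on_def trans_def antisym_def total_on_def Field_def
  apply (auto)
  apply (rule wf_subset[OF wf])
  apply auto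
  done

lemma card_seg:
  assumes "|Y::'a::wellorder set| <o |UNIV::'a set|"
  shows "\<exists>t::'a. |Y| =o |seg t|"
proof -
  let ?r = "{(x::'a, y). x \<le> y}"
  have F: "Field ?r = UNIV" unfolding Field_def by auto
  have W: "well_order_on UNIV ?r" using wo_le F by metis
  have "|UNIV::'a set| \<le>o ?r" using card_of_least[OF W] .
  hence "|Y| <o ?r" using assms ordLess_ordLeq_trans by blast
  then obtain a where "|Y| =o Restr ?r (underS ?r a)"
    using ordLess_iff_ordIso_Restr[OF wo_le card_of_Well_order] F by auto
  hence "|Field |Y|| =o |Field (Restr ?r (underS ?r a))|" by (rule card_of_cong)
  moreover have "underS ?r a = seg a" unfolding underS_def seg_def by auto
  moreover have "Field (Restr ?r (seg a)) = seg a" unfolding Field_def seg_def by auto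
  ultimately have "|Y| =o |seg a|" by (simp add: Field_card_of)
  thus ?thesis by blast
qed

lemma cf_ex: "\<exists>C. cofinal_in C d \<and> |C| =o |seg (cf d)|"
proof -
  have "\<exists>C. cofinal_in C d \<and> |C| =o |seg (d::'a::wellorder)|"
    by (rule exI[of _ "seg d"]) (auto simp: cofinal_in_def seg_def card_of_refl)
  hence "\<exists>t::'a. \<exists>C. cofinal_in C d \<and> |C| =o |seg t|" by blast
  thus ?thesis unfolding cf_def by (rule LeastI_ex)
qed

lemma cf_min: "cofinal_in C d \<Longrightarrow> |C| =o |seg t| \<Longrightarrow> cf d \<le> t"
  unfolding cf_def by (rule Least_le) blast

lemma seg_mono: "x \<le> y \<Longrightarrow> seg x \<subseteq> seg y"
  unfolding seg_def by auto

lemma cf_card: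
  assumes "t < cf d" shows "|seg t| <o |seg (cf d)|"
proof (rule ccontr)
  assume "\<not> |seg t| <o |seg (cf d)|"
  hence "|seg (cf d)| \<le>o |seg t|" using not_ordLess_iff_ordLeq card_of_Well_order by blast
  moreover have "|seg t| \<le>o |seg (cf d)|" using assms seg_mono card_of_mono1 by (metis less_imp_le)
  ultimately have "|seg (cf d)| =o |seg t|" using ordIso_iff_ordLeq by blast
  moreover obtain C where "cofinal_in C d" "|C| =o |seg (cf d)|" using cf_ex by blast
  ultimately have "cf d \<le> t" using cf_min ordIso_transitive by blast
  thus False using assms by simp
qed

lemma omega_iter:
  fixes U :: "'a::wellorder set"
  assumes down: "\<And>x y. x\<in>U \<Longrightarrow> y \<le> x \<Longrightarrow> y\<in>U"
  and step: "\<And>x. x\<in>U \<Longrightarrow> \<exists>y\<in>U. x<y \<and> R x y"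
  and bnd: "\<And>Y. Y \<subseteq> U \<Longrightarrow> countable Y \<Longrightarrow> \<exists>x\<in>U. \<forall>y\<in>Y. y<x"
  and b: "b\<in>U"
  shows "\<exists>s d. s 0 = b \<and> (\<forall>n. s n < s (Suc n) \<and> R (s n) (s (Suc n))) \<and> d\<in>U
     \<and> (\<forall>n. s n < d) \<and> (\<forall>b'<d. \<exists>n. b'<s n)"
proof -
  define s where "s = rec_nat b (\<lambda>n x. SOME y. y\<in>U \<and> x<y \<and> R x y)"
  have s0: "s 0 = b" and sS: "\<And>n. s (Suc n) = (SOME y. y\<in>U \<and> s n<y \<and> R (s n) y)"
    unfolding s_def by auto
  have sU: "\<forall>n. s n \<in> U \<and> s n < s (Suc n) \<and> R (s n) (s (Suc n))"
  proof
    fix n show "s n \<in> U \<and> s n < s (Suc n) \<and> R (s n) (s (Suc n))"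
    proof (induction n)
      case 0
      then show ?case using step[OF b] someI_ex[of "\<lambda>y. y\<in>U \<and> b<y \<and> R b y"] s0 sS[of 0] b by auto
    next
      case (Suc n)
      hence "s (Suc n) \<in> U" using sS[of n] someI_ex[of "\<lambda>y. y\<in>U \<and> s n<y \<and> R (s n) y"] step by auto
      then show ?case using step[of "s (Suc n)"] someI_ex[of "\<lambda>y. y\<in>U \<and> s (Suc n)<y \<and> R (s (Suc n)) y"] sS[of "Suc n"] by auto
    qed
  qed
  obtain x where x: "x\<in>U" "\<forall>n. s n < x" using bnd[of "range s"] sU by auto
  define d where "d = (LEAST d. \<forall>n. s n \<le> d)"
  have d1: "\<forall>n. s n \<le> d" unfolding d_def by (rule LeastI[of _ x]) (use x in \<open>auto intro: less_imp_le\<close>)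
  have "d \<le> x" unfolding d_def by (rule Least_le) (use x in \<open>auto intro: less_imp_le\<close>)
  hence dU: "d \<in> U" using down x by auto
  have d2: "\<forall>n. s n < d" using d1 sU by (meson less_le_trans)
  have d3: "\<forall>b'<d. \<exists>n. b'<s n"
  proof (intro allI impI, rule ccontr)
    fix b' assume "b' < d" "\<not> (\<exists>n. b' < s n)"
    hence "\<forall>n. s n \<le> b'" by (auto simp: not_less)
    hence "d \<le> b'" unfolding d_def by (rule Least_le)
    thus False using \<open>b' < d\<close> by simp
  qed
  show ?thesis using s0 sU dU d2 d3 by blast
qed

lemma countable_less_unc:
  assumes "countable (Y::'b set)" "\<not> countable (Z::'c set)" shows "|Y| <o |Z|"
proof -
  have "|Y| \<le>o |UNIV::nat set|" using assms countable_card_of_nat by blast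
  moreover have "\<not> |Z| \<le>o |UNIV::nat set|" using assms countable_card_of_nat by blast
  ultimately have "\<not> |Z| \<le>o |Y|" using ordLeq_transitive by metis
  thus ?thesis using not_ordLeq_iff_ordLess card_of_Well_order by metis
qed

lemma finite_less_inf: "finite A \<Longrightarrow> \<not> finite B \<Longrightarrow> |A| <o |B|"
  by (rule finite_ordLess_infinite) (auto simp: Field_card_of card_of_well_order_on)

lemma un_le_inf: assumes "\<not> finite C" "|A| \<le>o |C|" "|B| \<le>o |C|" shows "|A \<union> B| \<le>o |C|"
  using card_of_Un_ordLeq_infinite_Field[of "|C|" A B] assms
  by (simp add: Field_card_of card_of_card_order_on)

definition limpt :: "'a::wellorder set \<Rightarrow> 'a \<Rightarrow> bool" where
  "limpt X c \<longleftrightarrow> (\<exists>x\<in>X. x<c) \<and> (\<forall>b<c. \<exists>x\<in>X. b<x \<and> x<c)"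

definition clos :: "'a::wellorder set \<Rightarrow> 'a \<Rightarrow> 'a set" where
  "clos X d = {c. c<d \<and> (c\<in>X \<or> limpt X c)}"

lemma clos_sub: "clos X d \<subseteq> seg d"
  unfolding clos_def seg_def by auto

lemma clos_sup: "X \<subseteq> seg d \<Longrightarrow> X \<subseteq> clos X d"
  unfolding clos_def seg_def by auto

lemma limpt_clos: assumes "limpt (clos X d) c" shows "limpt X c"
proof -
  obtain x where x: "x \<in> clos X d" "x < c" using assms limpt_def by blast
  have 1: "\<exists>x\<in>X. x<c"
  proof (cases "x \<in> X")
    case True thus ?thesis using x by blast
  next
    case False
    hence "limpt X x" using x clos_def by blast
    then obtain x' where "x'\<in>X" "x'<x" using limpt_def by blast
    thus ?thesis using x by (meson less_trans)
  qed
  have 2: "\<forall>b<c. \<exists>x\<in>X. b<x \<and> x<c"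
  proof (intro allI impI)
    fix b assume "b < c"
    then obtain x where x: "x \<in> clos X d" "b < x" "x < c" using assms limpt_def by blast
    show "\<exists>x\<in>X. b<x \<and> x<c"
    proof (cases "x \<in> X")
      case True thus ?thesis using x by blast
    next
      case False
      hence "limpt X x" using x clos_def by blast
      then obtain x' where "x'\<in>X" "b<x'" "x'<x" using limpt_def x(2) by blast
      thus ?thesis using x by (meson less_trans)
    qed
  qed
  show ?thesis using 1 2 limpt_def by blast
qed

lemma limpt_lim: assumes "\<forall>c\<in>Y. c \<in> X \<or> limpt X c" "limpt Y d" shows "limpt X d"
proof -
  obtain x where x: "x \<in> Y" "x < d" using assms(2) limpt_def by blast
  have 1: "\<exists>x\<in>X. x<d"
  proof (cases "x \<in> X")
    case True thus ?thesis using x by blast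
  next
    case False
    hence "limpt X x" using x assms(1) by blast
    then obtain x' where "x'\<in>X" "x'<x" using limpt_def by blast
    thus ?thesis using x by (meson less_trans)
  qed
  have 2: "\<forall>b<d. \<exists>x\<in>X. b<x \<and> x<d"
  proof (intro allI impI)
    fix b assume "b < d"
    then obtain x where x: "x \<in> Y" "b < x" "x < d" using assms(2) limpt_def by blast
    show "\<exists>x\<in>X. b<x \<and> x<d"
    proof (cases "x \<in> X")
      case True thus ?thesis using x by blast
    next
      case False
      hence "limpt X x" using x assms(1) by blast
      then obtain x' where "x'\<in>X" "b<x'" "x'<x" using limpt_def x(2) by blast
      thus ?thesis using x by (meson less_trans)
    qed
  qed
  show ?thesis using 1 2 limpt_def by blast
qed

lemma limpt_mono: "limpt Y d \<Longrightarrow> Y \<subseteq> X \<Longrightarrow> limpt X d"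
  unfolding limpt_def by blast

lemma club_limpt: "club_below d C \<Longrightarrow> e<d \<Longrightarrow> limpt C e \<Longrightarrow> e\<in>C"
  unfolding club_below_def limpt_def by blast

lemma clos_club:
  assumes "X \<subseteq> seg d" "\<forall>b<d. \<exists>c\<in>X. b<c" shows "club_below d (clos X d)"
  unfolding club_below_def
proof (intro conjI allI impI)
  show "clos X d \<subseteq> seg d" by (rule clos_sub)
next
  fix b assume "b<d" thus "\<exists>c\<in>clos X d. b < c" using assms clos_sup by blast
next
  fix e assume e: "e<d" "(\<exists>c\<in>clos X d. c < e) \<and> (\<forall>b<e. \<exists>c\<in>clos X d. b < c \<and> c < e)"
  hence "limpt (clos X d) e" unfolding limpt_def by blast
  hence "limpt X e" by (rule limpt_clos)
  thus "e \<in> clos X d" using e(1) clos_def by blast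
qed

lemma club_above:
  assumes "club_below d C" "b<d" shows "club_below d {c\<in>C. b<c}"
  unfolding club_below_def
proof (intro conjI allI impI)
  have "C \<subseteq> seg d" using assms(1) unfolding club_below_def by (elim conjE)
  thus "{c\<in>C. b<c} \<subseteq> seg d" by blast
next
  fix b' assume "b'<d"
  hence "max b b' < d" using assms(2) by simp
  moreover have "\<forall>b<d. \<exists>c\<in>C. b < c" using assms(1) unfolding club_below_def by (elim conjE)
  ultimately obtain c where "c\<in>C" "max b b' < c" by blast
  moreover have "b < c" "b' < c" using \<open>max b b' < c\<close> by auto
  ultimately show "\<exists>c\<in>{c\<in>C. b<c}. b' < c" by blast
next
  fix e assume e: "e<d" "(\<exists>c\<in>{c\<in>C. b<c}. c < e) \<and> (\<forall>b'<e. \<exists>c\<in>{c\<in>C. b<c}. b' < c \<and> c < e)"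
  hence "limpt C e" unfolding limpt_def by blast
  hence "e \<in> C" using club_limpt assms(1) e(1) by blast
  moreover obtain c where "c\<in>C" "b<c" "c<e" using e(2) by blast
  hence "b < e" by simp
  ultimately show "e \<in> {c\<in>C. b<c}" by blast
qed

lemma lim_inj_card: "|{c. limpt X c \<and> c\<notin>X \<and> (\<exists>x\<in>X. c<x)}| \<le>o |X|"
proof -
  let ?Y = "{c. limpt X c \<and> c\<notin>X \<and> (\<exists>x\<in>X. c<x)}"
  define m where "m c = (LEAST x. x\<in>X \<and> c<x)" for c
  have m: "m c \<in> X \<and> c < m c" if "c \<in> ?Y" for c
  proof -
    have "\<exists>x. x\<in>X \<and> c<x" using that by blast
    thus ?thesis unfolding m_def by (rule LeastI_ex)
  qed
  have mle: "m c \<le> x" if "x\<in>X" "c<x" for c x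
    unfolding m_def by (rule Least_le) (use that in blast)
  have "inj_on m ?Y"
  proof (rule inj_onI)
    fix c1 c2 assume c: "c1 \<in> ?Y" "c2 \<in> ?Y" "m c1 = m c2"
    show "c1 = c2"
    proof (rule ccontr)
      assume "c1 \<noteq> c2"
      hence "c1 < c2 \<or> c2 < c1" by auto
      thus False
      proof
        assume "c1 < c2"
        then obtain x where "x\<in>X" "c1<x" "x<c2" using c(2) limpt_def by blast
        hence "m c1 < c2" using mle by (meson le_less_trans)
        thus False using m[OF c(2)] c(3) by (metis less_asym)
      next
        assume "c2 < c1"
        then obtain x where "x\<in>X" "c2<x" "x<c1" using c(1) limpt_def by blast
        hence "m c2 < c1" using mle by (meson le_less_trans)
        thus False using m[OF c(1)] c(3) by (metis less_asym)
      qed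
    qed
  qed
  moreover have "\<And>c. c \<in> ?Y \<Longrightarrow> m c \<in> X" using m by blast
  ultimately show ?thesis by (rule card_of_ordLeqI)
qed

lemma clos_in_union:
  assumes "cofinal_in X d"
  shows "clos X d \<subseteq> X \<union> {c. limpt X c \<and> c\<notin>X \<and> (\<exists>x\<in>X. c<x)}"
proof
  fix c assume c: "c \<in> clos X d"
  show "c \<in> X \<union> {c. limpt X c \<and> c\<notin>X \<and> (\<exists>x\<in>X. c<x)}"
  proof (cases "c \<in> X")
    case False
    have "c < d" "limpt X c" using c False clos_def by auto
    moreover obtain x where "x\<in>X" "c \<le> x" using assms \<open>c<d\<close> cofinal_in_def by blast
    ultimately show ?thesis using False le_less by auto
  qed simp
qed

lemma clos_card:
  assumes "cofinal_in X d" "\<not> finite C" "|X| \<le>o |C|"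
  shows "|clos X d| \<le>o |C|"
proof -
  have "|{c. limpt X c \<and> c\<notin>X \<and> (\<exists>x\<in>X. c<x)}| \<le>o |C|"
    using lim_inj_card assms(3) by (rule ordLeq_transitive)
  hence "|X \<union> {c. limpt X c \<and> c\<notin>X \<and> (\<exists>x\<in>X. c<x)}| \<le>o |C|"
    by (rule un_le_inf[OF assms(2) assms(3)])
  thus ?thesis by (rule ordLeq_transitive[OF card_of_mono1[OF clos_in_union[OF assms(1)]]])
qed

locale L27 =
  fixes mu kappa :: "'a::wellorder" and mus :: "'a \<Rightarrow> 'a"
  assumes lambda_succ: "\<forall>x::'a. |seg x| \<le>o |seg mu|"
    and lambda_big: "|seg mu| <o |UNIV :: 'a set|"
    and kappa_cf: "kappa = cf mu"
    and kappa_unc: "\<not> countable (seg kappa)"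
    and kappa_lt: "kappa < mu"
    and mus_incr: "\<forall>i j. i < j \<and> j < kappa \<longrightarrow> mus i < mus j"
    and mus0: "kappa < mus ord0"
    and mu_sum: "|seg mu| =o |SIGMA i:seg kappa. seg (mus i)|"
begin

lemma small_lt: "|Y| \<le>o |seg mu| \<Longrightarrow> |Y| <o |UNIV::'a set|"
  by (rule ordLeq_ordLess_trans[OF _ lambda_big])

lemma sub_seg_small: assumes "(Y::'a set) \<subseteq> seg x" shows "|Y| \<le>o |seg mu|"
  by (rule ordLeq_transitive[OF card_of_mono1[OF assms] lambda_succ[rule_format]])

lemma cf_le_card:
  assumes "cofinal_in Y (g::'a)" shows "|seg (cf g)| \<le>o |Y|"
proof -
  have "Y \<subseteq> seg g" using assms cofinal_in_def by blast
  hence "|Y| <o |UNIV::'a set|" by (intro small_lt sub_seg_small)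
  then obtain t :: 'a where t: "|Y| =o |seg t|" using card_seg by blast
  hence "cf g \<le> t" by (rule cf_min[OF assms])
  hence "|seg (cf g)| \<le>o |seg t|" by (intro card_of_mono1 seg_mono)
  thus ?thesis by (rule ordLeq_ordIso_trans[OF _ ordIso_symmetric[OF t]])
qed

lemma small_bounded:
  assumes "Y \<subseteq> seg (g::'a)" "|Y| <o |seg (cf g)|" shows "\<exists>b<g. \<forall>y\<in>Y. y<b"
proof (rule ccontr)
  assume "\<not> (\<exists>b<g. \<forall>y\<in>Y. y<b)"
  hence "\<forall>b<g. \<exists>y\<in>Y. b \<le> y" by (meson not_less)
  hence "cofinal_in Y g" using assms(1) unfolding cofinal_in_def by blast
  thus False using cf_le_card assms(2) not_ordLess_ordLeq by blast
qed

lemma seg_mu_inf: "\<not> finite (seg mu)"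
proof
  assume "finite (seg mu)"
  hence "finite (seg kappa)" using seg_mono[of kappa mu] kappa_lt finite_subset less_imp_le by metis
  thus False using kappa_unc countable_finite by blast
qed

lemma univ_bounded:
  assumes "|Y::'a set| \<le>o |seg mu|" shows "\<exists>b. \<forall>y\<in>Y. y<b"
proof (rule ccontr)
  assume "\<not> (\<exists>b. \<forall>y\<in>Y. y<b)"
  hence "\<forall>b. \<exists>y\<in>Y. b \<le> y" by (meson not_less)
  hence U: "UNIV = (\<Union>y\<in>Y. insert y (seg y))" unfolding seg_def using le_less by blast
  note inf = seg_mu_inf
  have "\<forall>y\<in>Y. |insert y (seg y)| \<le>o |seg mu|"
  proof
    fix y :: 'a
    have "|{y}| \<le>o |seg mu|" using inf by (simp add: finite_less_inf ordLess_imp_ordLeq)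
    moreover have "|seg y| \<le>o |seg mu|" using lambda_succ by blast
    ultimately have "|{y} \<union> seg y| \<le>o |seg mu|"
      using un_le_inf inf by blast
    thus "|insert y (seg y)| \<le>o |seg mu|" by simp
  qed
  hence "|\<Union>y\<in>Y. insert y (seg y)| \<le>o |seg mu|"
    by (rule card_of_UNION_ordLeq_infinite[OF inf assms])
  hence "|UNIV::'a set| \<le>o |seg mu|" using U by simp
  thus False using lambda_big not_ordLess_ordLeq by blast
qed

lemma kinf: "\<not> finite (seg kappa)" using kappa_unc countable_finite by blast

lemma countable_small: "countable Y \<Longrightarrow> |Y| <o |seg kappa|"
  using countable_less_unc kappa_unc by blast

lemma kappa_card: "(t::'a) < kappa \<Longrightarrow> |seg t| <o |seg kappa|"
  using cf_card kappa_cf by blast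

lemma le_small: assumes "(j::'a) < kappa" shows "|{i. i \<le> j}| <o |seg kappa|"
proof -
  have "{i. i \<le> j} = {j} \<union> seg j" by (auto simp: seg_def)
  moreover have "|{j}| <o |seg kappa|" using kinf by (simp add: finite_less_inf)
  ultimately show ?thesis using card_of_Un_ordLess_infinite[OF kinf] kappa_card assms by metis
qed

lemma cf_unc_limit:
  assumes "\<not> countable (seg (cf (g::'a)))" "b < g" shows "\<exists>c. b<c \<and> c<g"
proof (rule ccontr)
  assume "\<not> (\<exists>c. b<c \<and> c<g)"
  hence "\<forall>b'<g. b' \<le> b" by (meson not_less)
  hence "cofinal_in {b} g" using assms(2) unfolding cofinal_in_def seg_def by blast
  hence "|seg (cf g)| \<le>o |{b}|" by (rule cf_le_card)
  moreover have "|{b}| \<le>o |UNIV::nat set|" using countable_card_of_nat[of "{b}"] by simp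
  ultimately have "|seg (cf g)| \<le>o |UNIV::nat set|" by (rule ordLeq_transitive)
  hence "countable (seg (cf g))" using countable_card_of_nat by blast
  thus False using assms by blast
qed


lemma kappa_reg:
  assumes "Y \<subseteq> seg kappa" "|Y| <o |seg kappa|" shows "\<exists>i<kappa. \<forall>y\<in>Y. y \<le> i"
proof (rule ccontr)
  assume H: "\<not> (\<exists>i<kappa. \<forall>y\<in>Y. y \<le> i)"
  hence unb: "\<forall>t<kappa. \<exists>y\<in>Y. t<y" by (meson not_le)
  obtain X where X: "cofinal_in X mu" "|X| =o |seg kappa|" using cf_ex[of mu] kappa_cf by auto
  obtain hx where hx: "bij_betw hx (seg kappa) X"
    using ordIso_symmetric[OF X(2)] card_of_ordIso by blast
  have Xs: "X \<subseteq> seg mu" using X(1) cofinal_in_def by blast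
  have hxs: "hx ` seg kappa = X" using hx bij_betw_imp_surj_on by blast
  have W: "\<forall>y\<in>Y. \<exists>b<mu. \<forall>c\<in>hx ` seg y. c < b"
  proof
    fix y assume "y\<in>Y"
    hence y: "y<kappa" using assms(1) seg_def by blast
    have "|hx ` seg y| \<le>o |seg y|" by (rule card_of_image)
    hence "|hx ` seg y| <o |seg kappa|" using kappa_card[OF y] by (rule ordLeq_ordLess_trans)
    hence "|hx ` seg y| <o |seg (cf mu)|" using kappa_cf by simp
    moreover have "hx ` seg y \<subseteq> hx ` seg kappa" using seg_mono[of y kappa] y by (simp add: image_mono)
    hence "hx ` seg y \<subseteq> seg mu" using hxs Xs by blast
    ultimately show "\<exists>b<mu. \<forall>c\<in>hx ` seg y. c < b" using small_bounded by blast
  qed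
  then obtain bb where bb: "\<forall>y\<in>Y. bb y < mu \<and> (\<forall>c\<in>hx`seg y. c < bb y)" by metis
  have "|bb ` Y| \<le>o |Y|" by (rule card_of_image)
  hence "|bb ` Y| <o |seg kappa|" using assms(2) by (rule ordLeq_ordLess_trans)
  hence "|bb ` Y| <o |seg (cf mu)|" using kappa_cf by simp
  moreover have "bb ` Y \<subseteq> seg mu" using bb seg_def by auto
  ultimately obtain s where s: "s<mu" "\<forall>b\<in>bb`Y. b<s" using small_bounded by blast
  obtain c where c: "c\<in>X" "s \<le> c" using X(1) s(1) unfolding cofinal_in_def by blast
  obtain t where t: "t\<in>seg kappa" "c = hx t" using c(1) hxs by blast
  obtain y where y: "y\<in>Y" "t<y" using unb t(1) seg_def by blast
  have "c \<in> hx ` seg y" using t y seg_def by auto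
  hence "c < bb y" using bb y by blast
  moreover have "bb y < s" using s y by blast
  ultimately show False using c(2) by simp
qed

lemma ord0_le: "ord0 \<le> x" unfolding ord0_def by (rule Least_le) simp

lemma mus_ge: assumes "i < kappa" shows "kappa < mus i"
proof (cases "i = ord0")
  case True thus ?thesis using mus0 by simp
next
  case False
  hence "ord0 < i" using ord0_le le_less by metis
  hence "mus ord0 < mus i" using mus_incr assms by blast
  thus ?thesis using mus0 by simp
qed

lemma mus_mono: assumes "j \<le> i" "i < kappa" shows "mus j \<le> mus i"
  using assms mus_incr le_less by metis

lemma mus_inf: assumes "i < kappa" shows "\<not> finite (seg (mus i))"
  using kinf seg_mono[of kappa "mus i"] mus_ge[OF assms] finite_subset less_imp_le by metis

lemma kappa_le_mus: assumes "i < kappa" shows "|seg kappa| \<le>o |seg (mus i)|"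
  using card_of_mono1 seg_mono mus_ge[OF assms] less_imp_le by metis

definition Sig where "Sig = (SIGMA i:seg kappa. seg (mus i))"

definition G :: "'a \<Rightarrow> 'a \<Rightarrow> 'a \<times> 'a" where
  "G d = (SOME g. inj_on g (seg d) \<and> g ` seg d \<subseteq> Sig)"

lemma G_prop: "inj_on (G d) (seg d) \<and> G d ` seg d \<subseteq> Sig"
proof -
  have "|seg d| \<le>o |Sig|" unfolding Sig_def
    using lambda_succ mu_sum ordLeq_ordIso_trans by blast
  hence "\<exists>g. inj_on g (seg d) \<and> g ` seg d \<subseteq> Sig" using card_of_ordLeq by blast
  thus ?thesis unfolding G_def by (rule someI_ex)
qed

definition bset :: "'a \<Rightarrow> 'a \<Rightarrow> 'a set" where
  "bset d i = {z. z < d \<and> fst (G d z) \<le> i}"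

lemma G_fst: assumes "z < d" shows "fst (G d z) < kappa"
proof -
  have "G d z \<in> Sig" using G_prop assms seg_def by blast
  thus ?thesis unfolding Sig_def seg_def by auto
qed

lemma in_bset: "z < d \<Longrightarrow> z \<in> bset d (fst (G d z))"
  unfolding bset_def by simp

lemma bset_mono: "i \<le> j \<Longrightarrow> bset d i \<subseteq> bset d j"
  unfolding bset_def by auto

lemma bset_sub: "bset d i \<subseteq> seg d"
  unfolding bset_def seg_def by auto

lemma bset_card: assumes "i < kappa" shows "|bset d i| \<le>o |seg (mus i)|"
proof -
  have im: "G d ` bset d i \<subseteq> {j. j \<le> i} \<times> seg (mus i)"
  proof
    fix p assume "p \<in> G d ` bset d i"
    then obtain z where z: "z < d" "fst (G d z) \<le> i" "p = G d z" unfolding bset_def by blast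
    have "G d z \<in> Sig" using G_prop z(1) seg_def by blast
    hence "snd p < mus (fst p)" using z unfolding Sig_def seg_def by auto
    moreover have "mus (fst p) \<le> mus i" using mus_mono z assms by simp
    ultimately have "snd p \<in> seg (mus i)" unfolding seg_def by simp
    moreover have "fst p \<le> i" using z by simp
    ultimately show "p \<in> {j. j \<le> i} \<times> seg (mus i)" by (cases p) auto
  qed
  have inj: "inj_on (G d) (bset d i)" by (rule inj_on_subset[OF conjunct1[OF G_prop] bset_sub])
  have 1: "|bset d i| \<le>o |{j. j \<le> i} \<times> seg (mus i)|"
    by (rule card_of_ordLeqI[OF inj]) (use im in blast)
  have "{j. j \<le> i} \<subseteq> seg (mus i)" using mus_ge[OF assms] assms unfolding seg_def by auto
  hence "|{j. j \<le> i}| \<le>o |seg (mus i)|" by (rule card_of_mono1)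
  moreover have "|seg (mus i)| \<le>o |seg (mus i)|" by (rule ordIso_imp_ordLeq[OF card_of_refl])
  ultimately have "|{j. j \<le> i} \<times> seg (mus i)| \<le>o |seg (mus i)|"
    using card_of_Times_ordLeq_infinite_Field[of "|seg (mus i)|"] mus_inf[OF assms]
    by (simp add: Field_card_of card_of_card_order_on)
  with 1 show ?thesis by (rule ordLeq_transitive)
qed


definition cofX :: "'a \<Rightarrow> 'a set" where
  "cofX d = (SOME X. cofinal_in X d \<and> card_of X =o card_of (seg (cf d)))"

lemma cofX: "cofinal_in (cofX d) d \<and> |cofX d| =o |seg (cf d)|"
  unfolding cofX_def by (rule someI_ex) (rule cf_ex)

definition eset :: "'a \<Rightarrow> 'a set" where
  "eset d = (if cf d \<le> kappa then clos (cofX d) d else {})"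

lemma eset_sub: "eset d \<subseteq> seg d"
  unfolding eset_def using clos_sub by auto

lemma eset_card: "|eset d| \<le>o |seg kappa|"
proof (cases "cf d \<le> kappa")
  case True
  have "|seg (cf d)| \<le>o |seg kappa|" by (rule card_of_mono1[OF seg_mono[OF True]])
  hence "|cofX d| \<le>o |seg kappa|" using cofX ordIso_ordLeq_trans by blast
  hence "|clos (cofX d) d| \<le>o |seg kappa|" using clos_card cofX kinf by blast
  thus ?thesis unfolding eset_def using True by simp
next
  case False
  thus ?thesis unfolding eset_def by (simp add: card_of_empty)
qed

definition aa :: "'a \<Rightarrow> 'a \<Rightarrow> 'a set" where
  "aa = wfrec {(x,y). x<y} (\<lambda>F d. \<lambda>i. bset d i \<union> eset d \<union> (\<Union>b\<in>eset d. F b i))"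

lemma aa_eq: "aa d i = bset d i \<union> eset d \<union> (\<Union>b\<in>eset d. aa b i)"
proof -
  have "aa d = (\<lambda>i. bset d i \<union> eset d \<union> (\<Union>b\<in>eset d. cut aa {(x,y). x<y} d b i))"
    unfolding aa_def by (rule wfrec[OF wf])
  moreover have "\<And>b. b \<in> eset d \<Longrightarrow> cut aa {(x,y). x<y} d b = aa b"
    using eset_sub seg_def by (intro cut_apply) auto
  ultimately show ?thesis by simp
qed

lemma aa_sub: "aa d i \<subseteq> seg d"
proof (induction d rule: less_induct)
  case (less d)
  have "\<forall>b\<in>eset d. aa b i \<subseteq> seg d"
  proof
    fix b assume "b \<in> eset d"
    hence "b < d" using eset_sub seg_def by blast
    thus "aa b i \<subseteq> seg d" using less.IH[of b] seg_mono[of b d] by (meson less_imp_le subset_trans)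
  qed
  thus ?case using aa_eq[of d i] bset_sub eset_sub by blast
qed

lemma aa_mono: "i \<le> j \<Longrightarrow> aa d i \<subseteq> aa d j"
proof (induction d rule: less_induct)
  case (less d)
  have "\<forall>b\<in>eset d. aa b i \<subseteq> aa b j"
  proof
    fix b assume "b \<in> eset d"
    hence "b < d" using eset_sub seg_def by blast
    thus "aa b i \<subseteq> aa b j" using less by blast
  qed
  thus ?case using aa_eq[of d i] aa_eq[of d j] bset_mono[OF less.prems, of d] by blast
qed

lemma bset_aa: "bset d i \<subseteq> aa d i"
  using aa_eq[of d i] by blast

lemma eset_aa: "b \<in> eset d \<Longrightarrow> b \<in> aa d i"
  using aa_eq[of d i] by blast

lemma eset_aa2: "b \<in> eset d \<Longrightarrow> aa b i \<subseteq> aa d i"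
  using aa_eq[of d i] by blast

lemma aa_card: assumes "i < kappa" shows "|aa d i| \<le>o |seg (mus i)|"
proof (induction d rule: less_induct)
  case (less d)
  have ek: "|eset d| \<le>o |seg (mus i)|" using eset_card kappa_le_mus[OF assms] by (rule ordLeq_transitive)
  have "\<forall>b\<in>eset d. |aa b i| \<le>o |seg (mus i)|"
  proof
    fix b assume "b \<in> eset d"
    hence "b < d" using eset_sub seg_def by blast
    thus "|aa b i| \<le>o |seg (mus i)|" using less by blast
  qed
  hence "|\<Union>b\<in>eset d. aa b i| \<le>o |seg (mus i)|"
    by (rule card_of_UNION_ordLeq_infinite[OF mus_inf[OF assms] ek])
  moreover have "|bset d i \<union> eset d| \<le>o |seg (mus i)|"
    by (rule un_le_inf[OF mus_inf[OF assms] bset_card[OF assms] ek])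
  ultimately have "|bset d i \<union> eset d \<union> (\<Union>b\<in>eset d. aa b i)| \<le>o |seg (mus i)|"
    by (rule un_le_inf[OF mus_inf[OF assms], rotated])
  thus ?case using aa_eq[of d i] by simp
qed


lemma countable_le_mu: assumes "countable Y" shows "|Y| \<le>o |seg mu|"
proof -
  have "|Y| <o |seg kappa|" using countable_small[OF assms] .
  moreover have "|seg kappa| \<le>o |seg mu|" using card_of_mono1[OF seg_mono] kappa_lt less_imp_le by metis
  ultimately show ?thesis using ordLess_ordLeq_trans ordLess_imp_ordLeq by blast
qed

lemma omega_univ:
  assumes step: "\<And>x::'a. \<exists>y. x<y \<and> R x y"
  shows "\<exists>s d. s 0 = b \<and> (\<forall>n. s n < s (Suc n) \<and> R (s n) (s (Suc n)))
     \<and> (\<forall>n. s n < d) \<and> (\<forall>b'<d. \<exists>n. b'<s n)"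
proof -
  have "\<exists>s d. s 0 = b \<and> (\<forall>n. s n < s (Suc n) \<and> R (s n) (s (Suc n))) \<and> d\<in>UNIV
     \<and> (\<forall>n. s n < d) \<and> (\<forall>b'<d. \<exists>n. b'<s n)"
  proof (rule omega_iter)
    fix Y :: "'a set" assume "countable Y"
    thus "\<exists>x\<in>UNIV. \<forall>y\<in>Y. y < x" using univ_bounded countable_le_mu by blast
  qed (use step in auto)
  thus ?thesis by blast
qed

lemma countable_cf:
  assumes "\<forall>n. (s::nat \<Rightarrow> 'a) n < d" "\<forall>b'<d. \<exists>n. b'<s n" shows "countable (seg (cf d))"
proof -
  have "cofinal_in (range s) d" unfolding cofinal_in_def seg_def using assms less_imp_le by blast
  hence "|seg (cf d)| \<le>o |range s|" by (rule cf_le_card)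
  moreover have "|range s| \<le>o |UNIV::nat set|" using countable_card_of_nat by blast
  ultimately have "|seg (cf d)| \<le>o |UNIV::nat set|" by (rule ordLeq_transitive)
  thus ?thesis using countable_card_of_nat by blast
qed

lemma small_bounded_k:
  assumes "cf g = kappa" "Y \<subseteq> seg g" "|Y| <o |seg kappa|" shows "\<exists>b<g. \<forall>y\<in>Y. y<b"
  using small_bounded[OF assms(2)] assms(1,3) by simp

lemma omega_below:
  assumes cfd: "cf g = kappa" and step: "\<And>x. x < g \<Longrightarrow> \<exists>y<g. x<y \<and> R x y" and b: "b < g"
  shows "\<exists>s d. s 0 = b \<and> (\<forall>n. s n < s (Suc n) \<and> R (s n) (s (Suc n))) \<and> d < g
     \<and> (\<forall>n. s n < d) \<and> (\<forall>b'<d. \<exists>n. b'<s n) \<and> cf d \<noteq> kappa"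
proof -
  have "\<exists>s d. s 0 = b \<and> (\<forall>n. s n < s (Suc n) \<and> R (s n) (s (Suc n))) \<and> d\<in>seg g
     \<and> (\<forall>n. s n < d) \<and> (\<forall>b'<d. \<exists>n. b'<s n)"
  proof (rule omega_iter)
    fix Y :: "'a set" assume "Y \<subseteq> seg g" "countable Y"
    thus "\<exists>x\<in>seg g. \<forall>y\<in>Y. y < x" using small_bounded_k[OF cfd] countable_small seg_def
      by (metis mem_Collect_eq)
  next
    fix x y assume "x \<in> seg g" "y \<le> x" thus "y \<in> seg g" unfolding seg_def by simp
  next
    fix x assume "x \<in> seg g" thus "\<exists>y\<in>seg g. x < y \<and> R x y" using step unfolding seg_def by simp
  next
    show "b \<in> seg g" unfolding seg_def using b by simp
  qed
  then obtain s d where sd: "s 0 = b" "\<forall>n. s n < s (Suc n) \<and> R (s n) (s (Suc n))" "d\<in>seg g"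
     "\<forall>n. s n < d" "\<forall>b'<d. \<exists>n. b'<s n" by blast
  have "countable (seg (cf d))" using countable_cf sd(4,5) by blast
  hence "cf d \<noteq> kappa" using kappa_unc by auto
  thus ?thesis using sd seg_def by blast
qed

lemma ord0_lt_kappa: "ord0 < kappa"
proof -
  have "kappa \<noteq> ord0"
  proof
    assume "kappa = ord0"
    hence "seg kappa = {}" unfolding seg_def using ord0_le not_less by blast
    thus False using kappa_unc by simp
  qed
  thus ?thesis using ord0_le le_less by metis
qed

context fixes f :: "'a \<Rightarrow> 'a"
begin

definition AA :: "'a \<Rightarrow> 'a set" where "AA i = Aset aa f i"

definition ZZ :: "'a \<Rightarrow> 'a \<Rightarrow> 'a set" where "ZZ d i = {z \<in> aa d i. f z \<in> aa d i}"

lemma AA_iff: "d \<in> AA i \<longleftrightarrow> (\<forall>b<d. \<exists>z\<in>ZZ d i. b < z)"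
  unfolding AA_def Aset_def ZZ_def is_sup_of_def by simp

lemma ZZ_mono: "i \<le> j \<Longrightarrow> ZZ d i \<subseteq> ZZ d j"
  unfolding ZZ_def using aa_mono by blast

lemma AA_mono: assumes "i \<le> j" shows "AA i \<subseteq> AA j"
proof
  fix d assume "d \<in> AA i"
  thus "d \<in> AA j" unfolding AA_iff using ZZ_mono[OF assms, of d] by blast
qed

definition E0 :: "'a set" where "E0 = {d. \<forall>z<d. f z < d}"
definition EE :: "'a set" where "EE = {d. limpt E0 d}"

lemma E0_unb: "\<exists>p\<in>E0. b < p"
proof -
  have "\<exists>s d. s 0 = b \<and> (\<forall>n. s n < s (Suc n) \<and> (\<lambda>x y. \<forall>z<x. f z < y) (s n) (s (Suc n)))
     \<and> (\<forall>n. s n < d) \<and> (\<forall>b'<d. \<exists>n. b'<s n)"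
  proof (rule omega_univ)
    fix x
    have "|f ` seg x| \<le>o |seg mu|" using card_of_image lambda_succ ordLeq_transitive by blast
    moreover have "|{x}| \<le>o |seg mu|" using seg_mu_inf by (simp add: finite_less_inf ordLess_imp_ordLeq)
    ultimately have "|{x} \<union> f ` seg x| \<le>o |seg mu|" using un_le_inf seg_mu_inf by blast
    then obtain y where "\<forall>q\<in>{x} \<union> f ` seg x. q < y" using univ_bounded by blast
    hence "x < y \<and> (\<forall>z<x. f z < y)" unfolding seg_def by blast
    thus "\<exists>y. x < y \<and> (\<lambda>x y. \<forall>z<x. f z < y) x y" by blast
  qed
  then obtain s d where sd: "s 0 = b" "\<forall>n. s n < s (Suc n) \<and> (\<forall>z<s n. f z < s (Suc n))"
     "\<forall>n. s n < d" "\<forall>b'<d. \<exists>n. b'<s n" by auto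
  have "d \<in> E0" unfolding E0_def
  proof (intro CollectI allI impI)
    fix z assume "z < d"
    then obtain n where "z < s n" using sd by blast
    hence "f z < s (Suc n)" using sd by blast
    thus "f z < d" using sd(3) by (meson less_trans)
  qed
  moreover have "b < d" using sd by metis
  ultimately show ?thesis by blast
qed

lemma EE_club: "club EE"
  unfolding club_def
proof (intro conjI allI impI)
  fix b
  have "\<exists>s d. s 0 = b \<and> (\<forall>n. s n < s (Suc n) \<and> (\<lambda>x y. \<exists>p\<in>E0. x<p \<and> p<y) (s n) (s (Suc n)))
     \<and> (\<forall>n. s n < d) \<and> (\<forall>b'<d. \<exists>n. b'<s n)"
  proof (rule omega_univ)
    fix x
    obtain p where p: "p\<in>E0" "x<p" using E0_unb by blast
    obtain y where "\<forall>q\<in>{p}. q < y" using univ_bounded[of "{p}"] seg_mu_inf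
      by (metis finite.emptyI finite_insert finite_less_inf ordLess_imp_ordLeq)
    hence "p < y" by simp
    thus "\<exists>y. x < y \<and> (\<lambda>x y. \<exists>p\<in>E0. x<p \<and> p<y) x y" using p by (meson less_trans)
  qed
  then obtain s d where sd: "s 0 = b" "\<forall>n. s n < s (Suc n) \<and> (\<exists>p\<in>E0. s n<p \<and> p<s (Suc n))"
     "\<forall>n. s n < d" "\<forall>b'<d. \<exists>n. b'<s n" by auto
  have "limpt E0 d" unfolding limpt_def
  proof (intro conjI allI impI)
    obtain p where "p\<in>E0" "p < s (Suc 0)" using sd(2) by blast
    thus "\<exists>x\<in>E0. x < d" using sd(3) by (meson less_trans)
  next
    fix b' assume "b' < d"
    then obtain n where n: "b' < s n" using sd by blast
    obtain p where "p\<in>E0" "s n < p" "p < s (Suc n)" using sd(2) by blast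
    thus "\<exists>x\<in>E0. b' < x \<and> x < d" using sd(3) n by (meson less_trans)
  qed
  moreover have "b < d" using sd by metis
  ultimately show "\<exists>c\<in>EE. b < c" unfolding EE_def by blast
next
  fix d assume "(\<exists>c\<in>EE. c < d) \<and> (\<forall>b<d. \<exists>c\<in>EE. b < c \<and> c < d)"
  hence "limpt EE d" unfolding limpt_def by blast
  moreover have "\<forall>c\<in>EE. c \<in> E0 \<or> limpt E0 c" unfolding EE_def by blast
  ultimately have "limpt E0 d" using limpt_lim by blast
  thus "d \<in> EE" unfolding EE_def by blast
qed

lemma EE_limpt: "limpt EE d \<Longrightarrow> d \<in> EE"
  using EE_club unfolding club_def limpt_def by blast

lemma EE_E0: assumes "d \<in> EE" "z < d" shows "f z < d"
proof -
  obtain c where "c \<in> E0" "z < c" "c < d" using assms unfolding EE_def limpt_def by blast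
  moreover from this(1) have "\<forall>z<c. f z < c" unfolding E0_def by simp
  ultimately show ?thesis by (meson less_trans)
qed

definition iota :: "'a \<Rightarrow> 'a \<Rightarrow> 'a" where
  "iota d z = max (fst (G d z)) (fst (G d (f z)))"

lemma iota: assumes "d \<in> EE" "z < d" shows "iota d z < kappa \<and> z \<in> ZZ d (iota d z)"
proof -
  have fz: "f z < d" using EE_E0 assms by blast
  have 1: "iota d z < kappa" unfolding iota_def using G_fst assms(2) fz by simp
  have "bset d (fst (G d z)) \<subseteq> bset d (iota d z)" unfolding iota_def by (rule bset_mono) simp
  hence "z \<in> bset d (iota d z)" using in_bset[OF assms(2)] by blast
  moreover have "bset d (fst (G d (f z))) \<subseteq> bset d (iota d z)" unfolding iota_def by (rule bset_mono) simp
  hence "f z \<in> bset d (iota d z)" using in_bset[OF fz] by blast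
  ultimately have "z \<in> ZZ d (iota d z)" unfolding ZZ_def using bset_aa by blast
  thus ?thesis using 1 by blast
qed

lemma B_main: assumes "d \<in> EE" "cf d \<noteq> kappa" shows "\<exists>i<kappa. d \<in> AA i"
proof (cases "cf d < kappa")
  case True
  define X where "X = cofX d"
  have X: "cofinal_in X d" "|X| =o |seg (cf d)|" using cofX X_def by auto
  have "|iota d ` X| \<le>o |X|" by (rule card_of_image)
  also have "|X| =o |seg (cf d)|" by (rule X(2))
  also have "|seg (cf d)| <o |seg kappa|" by (rule kappa_card[OF True])
  finally have sm: "|iota d ` X| <o |seg kappa|" .
  have "iota d ` X \<subseteq> seg kappa" using iota[OF assms(1)] X(1) unfolding cofinal_in_def seg_def by auto
  then obtain i where i: "i<kappa" "\<forall>y\<in>iota d ` X. y \<le> i" using kappa_reg sm by blast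
  have "d \<in> AA i" unfolding AA_iff
  proof (intro allI impI)
    fix b assume "b < d"
    moreover have "limpt E0 d" using assms(1) unfolding EE_def by simp
    ultimately obtain c where c: "b < c" "c < d" unfolding limpt_def by blast
    then obtain x where x: "x\<in>X" "c \<le> x" using X(1) unfolding cofinal_in_def by blast
    have "x < d" using X(1) x(1) unfolding cofinal_in_def seg_def by blast
    hence "x \<in> ZZ d (iota d x)" using iota[OF assms(1)] by blast
    moreover have "iota d x \<le> i" using i x by blast
    ultimately have "x \<in> ZZ d i" using ZZ_mono by blast
    thus "\<exists>z\<in>ZZ d i. b < z" using c x by (meson less_le_trans)
  qed
  thus ?thesis using i by blast
next
  case False
  hence gt: "kappa < cf d" using assms(2) by simp
  show ?thesis
  proof (rule ccontr)
    assume "\<not> (\<exists>i<kappa. d \<in> AA i)"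
    hence "\<forall>i<kappa. \<exists>b<d. \<forall>z\<in>ZZ d i. \<not> b < z" unfolding AA_iff by blast
    then obtain bb where bb: "\<forall>i<kappa. bb i < d \<and> (\<forall>z\<in>ZZ d i. \<not> bb i < z)" by metis
    have "|bb ` seg kappa| \<le>o |seg kappa|" by (rule card_of_image)
    also have "|seg kappa| <o |seg (cf d)|" by (rule cf_card[OF gt])
    finally have "|bb ` seg kappa| <o |seg (cf d)|" .
    moreover have "bb ` seg kappa \<subseteq> seg d" using bb unfolding seg_def by auto
    ultimately obtain s where s: "s < d" "\<forall>y\<in>bb ` seg kappa. y < s" using small_bounded by blast
    have "iota d s < kappa" "s \<in> ZZ d (iota d s)" using iota[OF assms(1) s(1)] by auto
    moreover have "bb (iota d s) < s" using s(2) calculation(1) unfolding seg_def by blast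
    ultimately show False using bb by blast
  qed
qed

lemma C_main:
  assumes "\<not> countable (seg (cf g))" "cf g \<le> kappa" "i < kappa" "reflects (AA i) g"
  shows "g \<in> AA i"
proof -
  have st: "stationary_below g (AA i \<inter> seg g)" using assms(4) unfolding reflects_def by blast
  define X where "X = cofX g"
  have X: "cofinal_in X g" using cofX X_def by auto
  have Xs: "X \<subseteq> seg g" using X unfolding cofinal_in_def by blast
  have unb: "\<forall>b<g. \<exists>c\<in>X. b<c"
  proof (intro allI impI)
    fix b assume "b < g"
    then obtain c where "b<c" "c<g" using cf_unc_limit[OF assms(1)] by blast
    then obtain x where "x \<in> X" "c \<le> x" using X unfolding cofinal_in_def by blast
    thus "\<exists>c\<in>X. b<c" using \<open>b<c\<close> by (meson less_le_trans)
  qed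
  have E: "eset g = clos X g" unfolding eset_def X_def using assms(2) by simp
  have cl: "club_below g (eset g)" unfolding E by (rule clos_club[OF Xs unb])
  show ?thesis unfolding AA_iff
  proof (intro allI impI)
    fix b assume "b < g"
    have "club_below g {c \<in> eset g. b < c}" by (rule club_above[OF cl \<open>b<g\<close>])
    hence "AA i \<inter> seg g \<inter> {c \<in> eset g. b < c} \<noteq> {}" using st unfolding stationary_below_def by blast
    then obtain be where be: "be \<in> AA i" "be \<in> eset g" "b < be" by blast
    then obtain z where z: "z \<in> ZZ be i" "b < z" unfolding AA_iff by blast
    have "ZZ be i \<subseteq> ZZ g i" unfolding ZZ_def using eset_aa2[OF be(2)] by blast
    thus "\<exists>z\<in>ZZ g i. b < z" using z by blast
  qed
qed


definition hh :: "'a \<Rightarrow> 'a" where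
  "hh b = (if \<exists>i<kappa. b \<in> AA i then (LEAST i. b \<in> AA i) else ord0)"

lemma hh_lt: "hh b < kappa"
proof (cases "\<exists>i<kappa. b \<in> AA i")
  case True
  then obtain i where i: "i<kappa" "b \<in> AA i" by blast
  have "(LEAST i. b \<in> AA i) \<le> i" by (rule Least_le) (rule i(2))
  thus ?thesis unfolding hh_def if_P[OF True] using i(1) by simp
next
  case False show ?thesis unfolding hh_def if_not_P[OF False] by (rule ord0_lt_kappa)
qed

lemma hh_gt: assumes "i<kappa" "b \<in> AA i" "b \<notin> AA j" shows "j < hh b"
proof (rule ccontr)
  assume "\<not> j < hh b"
  hence le: "hh b \<le> j" by simp
  have ex: "\<exists>i<kappa. b \<in> AA i" using assms by blast
  have "b \<in> AA (LEAST i. b \<in> AA i)" by (rule LeastI[of _ i]) (rule assms(2))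
  hence "b \<in> AA (hh b)" unfolding hh_def if_P[OF ex] .
  hence "b \<in> AA j" using AA_mono[OF le] by blast
  thus False using assms(3) by blast
qed

lemma D_main:
  assumes cfd: "cf d = kappa" and dE: "d \<in> EE" and nA: "\<forall>i<kappa. d \<notin> AA i"
  shows "\<exists>C. club_below d C \<and> strict_mono_on C hh"
proof -
  have dunc: "\<not> countable (seg (cf d))" using cfd kappa_unc by simp
  have "\<forall>j<kappa. \<exists>D. club_below d D \<and> D \<inter> AA j = {}"
  proof (intro allI impI)
    fix j assume j: "j<kappa"
    have "\<not> reflects (AA j) d"
    proof
      assume "reflects (AA j) d"
      hence "d \<in> AA j" using C_main[OF dunc] cfd j by simp
      thus False using nA j by blast
    qed
    hence "\<not> stationary_below d (AA j \<inter> seg d)" using dunc unfolding reflects_def by blast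
    then obtain D where D: "club_below d D" "AA j \<inter> seg d \<inter> D = {}" unfolding stationary_below_def by blast
    moreover have "D \<subseteq> seg d" using D(1) unfolding club_below_def by (elim conjE)
    ultimately show "\<exists>D. club_below d D \<and> D \<inter> AA j = {}" by blast
  qed
  then obtain DD where DD: "\<forall>j<kappa. club_below d (DD j) \<and> DD j \<inter> AA j = {}" by metis
  have DDs: "DD j \<subseteq> seg d" if "j<kappa" for j
    using DD that unfolding club_below_def by blast
  have DDu: "\<exists>c\<in>DD j. b<c" if "j<kappa" "b<d" for j b
  proof -
    have "\<forall>b<d. \<exists>c\<in>DD j. b<c" using DD that(1) unfolding club_below_def by blast
    thus ?thesis using that(2) by blast
  qed
  have DDl: "e \<in> DD j" if "j<kappa" "e<d" "limpt (DD j) e" for j e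
    using club_limpt DD that by blast
  have dlim: "limpt E0 d" using dE unfolding EE_def by simp
  have "\<forall>y<d. \<exists>p. y<p \<and> p<d \<and> p\<in>EE \<and> cf p \<noteq> kappa"
  proof (intro allI impI)
    fix y assume "y<d"
    have "\<exists>s q. s 0 = y \<and> (\<forall>n. s n < s (Suc n) \<and> (\<lambda>x z. \<exists>p\<in>E0. x<p \<and> p<z) (s n) (s (Suc n))) \<and> q < d
     \<and> (\<forall>n. s n < q) \<and> (\<forall>b'<q. \<exists>n. b'<s n) \<and> cf q \<noteq> kappa"
    proof (rule omega_below[OF cfd _ \<open>y<d\<close>])
      fix x assume "x<d"
      then obtain p where p: "p\<in>E0" "x<p" "p<d" using dlim unfolding limpt_def by blast
      then obtain z where "p<z" "z<d" using cf_unc_limit[OF dunc] by blast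
      thus "\<exists>z<d. x<z \<and> (\<lambda>x z. \<exists>p\<in>E0. x<p \<and> p<z) x z" using p by (meson less_trans)
    qed
    then obtain s q where sq: "s 0 = y" "\<forall>n. s n < s (Suc n) \<and> (\<exists>p\<in>E0. s n<p \<and> p<s (Suc n))"
      "q < d" "\<forall>n. s n < q" "\<forall>b'<q. \<exists>n. b'<s n" "cf q \<noteq> kappa" by auto
    have "limpt E0 q" unfolding limpt_def
    proof (intro conjI allI impI)
      obtain p where "p\<in>E0" "p < s (Suc 0)" using sq(2) by blast
      thus "\<exists>x\<in>E0. x < q" using sq(4) by (meson less_trans)
    next
      fix b' assume "b' < q"
      then obtain n where n: "b' < s n" using sq by blast
      obtain p where "p\<in>E0" "s n < p" "p < s (Suc n)" using sq(2) by blast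
      thus "\<exists>x\<in>E0. b' < x \<and> x < q" using sq(4) n by (meson less_trans)
    qed
    hence "q \<in> EE" unfolding EE_def by simp
    moreover have "y < q" using sq by metis
    ultimately show "\<exists>p. y<p \<and> p<d \<and> p\<in>EE \<and> cf p \<noteq> kappa" using sq(3,6) by blast
  qed
  then obtain pp where pp: "\<forall>y<d. y < pp y \<and> pp y < d \<and> pp y \<in> EE \<and> cf (pp y) \<noteq> kappa" by metis
  define Y where "Y = cofX d"
  have Y: "cofinal_in Y d" "|Y| =o |seg kappa|" using cofX[of d] cfd unfolding Y_def by auto
  have Ys: "Y \<subseteq> seg d" using Y(1) unfolding cofinal_in_def by blast
  define W where "W = pp ` Y"
  have Ws: "W \<subseteq> seg d" unfolding W_def using pp Ys unfolding seg_def by auto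
  have WE: "\<forall>w\<in>W. w\<in>EE \<and> cf w \<noteq> kappa" unfolding W_def using pp Ys unfolding seg_def by auto
  have Wunb: "\<forall>b<d. \<exists>w\<in>W. b<w"
  proof (intro allI impI)
    fix b assume "b<d"
    then obtain y where "y\<in>Y" "b \<le> y" using Y(1) unfolding cofinal_in_def by blast
    moreover have "y < pp y" using pp Ys \<open>y\<in>Y\<close> unfolding seg_def by blast
    ultimately show "\<exists>w\<in>W. b<w" unfolding W_def by (meson image_eqI le_less_trans)
  qed
  have "|W| \<le>o |Y|" unfolding W_def by (rule card_of_image)
  hence Wc: "|W| \<le>o |seg kappa|" using Y(2) by (rule ordLeq_ordIso_trans)
  obtain d0 where "d0 \<in> E0" "d0 < d" using dlim unfolding limpt_def by blast
  hence Wne: "W \<noteq> {}" using Wunb by blast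
  have "\<exists>g. g ` seg kappa = W" using card_of_ordLeq2[OF Wne, of "seg kappa"] Wc by simp
  then obtain w where w: "w ` seg kappa = W" by blast
  have wW: "w e \<in> W" if "e < kappa" for e using w that unfolding seg_def by blast
  define X where "X = {w e | e. e < kappa \<and> (\<forall>e'<e. w e' < w e)}"
  have XW: "X \<subseteq> W" unfolding X_def using wW by blast
  have Xs: "X \<subseteq> seg d" using XW Ws by blast
  define eb where "eb b = (LEAST e. e < kappa \<and> b \<le> w e)" for b
  have eb: "eb b < kappa \<and> b \<le> w (eb b) \<and> w (eb b) \<in> X" if bd: "b < d" for b
  proof -
    obtain w' where "w' \<in> W" "b < w'" using Wunb bd by blast
    then obtain e where e: "e < kappa" "b \<le> w e" using w unfolding seg_def by (metis imageE less_imp_le mem_Collect_eq)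
    have 1: "eb b < kappa \<and> b \<le> w (eb b)" unfolding eb_def by (rule LeastI[of _ e]) (use e in blast)
    have "\<forall>e'<eb b. w e' < w (eb b)"
    proof (intro allI impI)
      fix e' assume "e' < eb b"
      hence "\<not> (e' < kappa \<and> b \<le> w e')" unfolding eb_def by (rule not_less_Least)
      moreover have "e' < kappa" using \<open>e' < eb b\<close> 1 by (meson less_trans)
      ultimately have "w e' < b" by simp
      thus "w e' < w (eb b)" using 1 by (meson less_le_trans)
    qed
    hence "w (eb b) \<in> X" unfolding X_def using 1 by blast
    thus ?thesis using 1 by blast
  qed
  have Xsmall: "|{c\<in>X. c \<le> w (eb b)}| <o |seg kappa|" if "b < d" for b
  proof -
    have "{c\<in>X. c \<le> w (eb b)} \<subseteq> w ` {e. e \<le> eb b}"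
    proof
      fix c assume c: "c \<in> {c\<in>X. c \<le> w (eb b)}"
      then obtain e where e: "c = w e" "e < kappa" "\<forall>e'<e. w e' < w e" unfolding X_def by blast
      have "e \<le> eb b"
      proof (rule ccontr)
        assume "\<not> e \<le> eb b"
        hence "w (eb b) < w e" using e(3) by simp
        moreover have "w e \<le> w (eb b)" using c e(1) by simp
        ultimately show False by simp
      qed
      thus "c \<in> w ` {e. e \<le> eb b}" using e(1) by blast
    qed
    hence "|{c\<in>X. c \<le> w (eb b)}| \<le>o |w ` {e. e \<le> eb b}|" by (rule card_of_mono1)
    also have "|w ` {e. e \<le> eb b}| \<le>o |{e. e \<le> eb b}|" by (rule card_of_image)
    also have "|{e. e \<le> eb b}| <o |seg kappa|" using le_small eb[OF that] by blast
    finally show ?thesis .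
  qed
  have Xunb: "\<forall>b<d. \<exists>c\<in>X. b<c"
  proof (intro allI impI)
    fix b assume "b<d"
    then obtain c where "b<c" "c<d" using cf_unc_limit[OF dunc] by blast
    thus "\<exists>c\<in>X. b<c" using eb[of c] by (meson less_le_trans)
  qed
  define T where "T = clos X d"
  have Tclub: "club_below d T" unfolding T_def by (rule clos_club[OF Xs Xunb])
  have Ts: "T \<subseteq> seg d" unfolding T_def by (rule clos_sub)
  have XT: "X \<subseteq> T" unfolding T_def by (rule clos_sup[OF Xs])
  have Tsmall: "|T \<inter> seg b| <o |seg kappa|" if "b < d" for b
  proof -
    define x where "x = w (eb b)"
    define X' where "X' = {c\<in>X. c \<le> x}"
    have X'c: "|X'| <o |seg kappa|" unfolding X'_def x_def using Xsmall[OF that] .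
    have bx: "b \<le> x" "x \<in> X" using eb[OF that] unfolding x_def by auto
    have "T \<inter> seg b \<subseteq> X' \<union> {c. limpt X' c \<and> c\<notin>X' \<and> (\<exists>x'\<in>X'. c<x')}"
    proof
      fix c assume c: "c \<in> T \<inter> seg b"
      hence cb: "c < b" unfolding seg_def by blast
      hence cx: "c < x" using bx by (meson less_le_trans)
      show "c \<in> X' \<union> {c. limpt X' c \<and> c\<notin>X' \<and> (\<exists>x'\<in>X'. c<x')}"
      proof (cases "c \<in> X")
        case True
        have "c \<le> x" using cx by simp
        hence "c \<in> X'" unfolding X'_def using True by simp
        thus ?thesis by blast
      next
        case False
        hence lc: "limpt X c" using c unfolding T_def clos_def by blast
        have "limpt X' c" unfolding limpt_def
        proof (intro conjI allI impI)
          obtain x' where x': "x'\<in>X" "x'<c" using lc unfolding limpt_def by blast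
          have "x' \<le> x" using x'(2) cx by simp
          hence "x' \<in> X'" unfolding X'_def using x'(1) by simp
          thus "\<exists>x'\<in>X'. x' < c" using x'(2) by blast
        next
          fix b' assume "b' < c"
          then obtain x' where x': "x'\<in>X" "b'<x'" "x'<c" using lc unfolding limpt_def by blast
          have "x' \<le> x" using x'(3) cx by simp
          hence "x' \<in> X'" unfolding X'_def using x'(1) by simp
          thus "\<exists>x'\<in>X'. b' < x' \<and> x' < c" using x'(2,3) by blast
        qed
        moreover have "c \<notin> X'" using False unfolding X'_def by blast
        moreover have "x \<in> X'" unfolding X'_def using bx by simp
        ultimately have "limpt X' c \<and> c\<notin>X' \<and> (\<exists>x'\<in>X'. c<x')" using cx by blast
        thus ?thesis by blast
      qed
    qed
    hence "|T \<inter> seg b| \<le>o |X' \<union> {c. limpt X' c \<and> c\<notin>X' \<and> (\<exists>x'\<in>X'. c<x')}|" by (rule card_of_mono1)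
    moreover have "|{c. limpt X' c \<and> c\<notin>X' \<and> (\<exists>x'\<in>X'. c<x')}| <o |seg kappa|"
      using lim_inj_card X'c by (rule ordLeq_ordLess_trans)
    hence "|X' \<union> {c. limpt X' c \<and> c\<notin>X' \<and> (\<exists>x'\<in>X'. c<x')}| <o |seg kappa|"
      by (rule card_of_Un_ordLess_infinite[OF kinf X'c])
    ultimately show ?thesis by (rule ordLeq_ordLess_trans)
  qed
  have TA: "\<exists>i<kappa. c \<in> AA i" if "c \<in> T" for c
  proof -
    have "c \<in> EE \<and> cf c \<noteq> kappa"
    proof (cases "c \<in> X")
      case True thus ?thesis using XW WE by blast
    next
      case False
      have cd: "c < d" using that Ts unfolding seg_def by blast
      have lc: "limpt X c" using that False unfolding T_def clos_def by blast
      have "X \<subseteq> EE" using XW WE by blast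
      hence "limpt EE c" using lc limpt_mono by blast
      hence 1: "c \<in> EE" by (rule EE_limpt)
      have "cofinal_in (X \<inter> seg c) c" unfolding cofinal_in_def
      proof (intro conjI allI impI)
        show "X \<inter> seg c \<subseteq> seg c" by blast
      next
        fix b assume "b < c"
        then obtain x where x: "x\<in>X" "b<x" "x<c" using lc unfolding limpt_def by blast
        have "x \<in> X \<inter> seg c" unfolding seg_def using x by simp
        moreover have "b \<le> x" using x(2) by simp
        ultimately show "\<exists>x\<in>X \<inter> seg c. b \<le> x" by blast
      qed
      hence "|seg (cf c)| \<le>o |X \<inter> seg c|" by (rule cf_le_card)
      moreover have "|X \<inter> seg c| \<le>o |T \<inter> seg c|" using XT by (intro card_of_mono1) blast
      ultimately have "|seg (cf c)| \<le>o |T \<inter> seg c|" by (rule ordLeq_transitive)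
      hence "|seg (cf c)| <o |seg kappa|" using Tsmall[OF cd] by (rule ordLeq_ordLess_trans)
      hence "cf c \<noteq> kappa" using ordLess_irreflexive by fastforce
      thus ?thesis using 1 by blast
    qed
    thus ?thesis using B_main by blast
  qed
  define C where "C = {be\<in>T. \<forall>ga\<in>T. ga<be \<longrightarrow> (\<forall>j. j \<le> hh ga \<longrightarrow> be \<in> DD j)}"
  have CT: "C \<subseteq> T" unfolding C_def by blast
  have mono: "strict_mono_on C hh"
  proof (rule strict_mono_onI)
    fix r s assume rs: "r \<in> C" "s \<in> C" "r < s"
    have "r \<in> T" using rs(1) CT by blast
    hence "s \<in> DD (hh r)" using rs unfolding C_def by blast
    hence "s \<notin> AA (hh r)" using DD hh_lt by blast
    moreover obtain i where "i<kappa" "s \<in> AA i" using TA rs(2) CT by blast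
    ultimately show "hh r < hh s" using hh_gt by blast
  qed
  have Cclub: "club_below d C" unfolding club_below_def
  proof (intro conjI allI impI)
    show "C \<subseteq> seg d" using CT Ts by blast
  next
    fix e assume e: "e<d" "(\<exists>c\<in>C. c < e) \<and> (\<forall>b<e. \<exists>c\<in>C. b < c \<and> c < e)"
    hence lC: "limpt C e" unfolding limpt_def by blast
    hence "limpt T e" using CT limpt_mono by blast
    hence eT: "e \<in> T" using club_limpt[OF Tclub e(1)] by blast
    have "\<forall>ga\<in>T. ga<e \<longrightarrow> (\<forall>j. j \<le> hh ga \<longrightarrow> e \<in> DD j)"
    proof (intro ballI allI impI)
      fix ga j assume ga: "ga \<in> T" "ga < e" "j \<le> hh ga"
      have j: "j < kappa" using ga(3) hh_lt by (meson le_less_trans)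
      have "limpt (DD j) e" unfolding limpt_def
      proof (intro conjI allI impI)
        obtain c where "c\<in>C" "ga<c" "c<e" using lC ga(2) unfolding limpt_def by blast
        hence "c \<in> DD j" using ga unfolding C_def by blast
        thus "\<exists>c\<in>DD j. c < e" using \<open>c<e\<close> by blast
      next
        fix b assume "b < e"
        hence "max b ga < e" using ga(2) by simp
        then obtain c where "c\<in>C" "max b ga<c" "c<e" using lC unfolding limpt_def by blast
        moreover hence "c \<in> DD j" using ga unfolding C_def by auto
        ultimately show "\<exists>c\<in>DD j. b < c \<and> c < e" by auto
      qed
      thus "e \<in> DD j" using DDl j e(1) by blast
    qed
    thus "e \<in> C" unfolding C_def using eT by blast
  next
    fix b assume "b < d"
    let ?R = "\<lambda>x y. (\<exists>t\<in>T. x<t \<and> t<y) \<and> (\<forall>ga\<in>T. ga<x \<longrightarrow> (\<forall>j. j \<le> hh ga \<longrightarrow> (\<exists>p\<in>DD j. x<p \<and> p<y)))"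
    have "\<exists>s q. s 0 = b \<and> (\<forall>n. s n < s (Suc n) \<and> ?R (s n) (s (Suc n))) \<and> q < d
     \<and> (\<forall>n. s n < q) \<and> (\<forall>b'<q. \<exists>n. b'<s n) \<and> cf q \<noteq> kappa"
    proof (rule omega_below[OF cfd _ \<open>b<d\<close>])
      fix x assume x: "x<d"
      have "hh ` (T \<inter> seg x) \<subseteq> seg kappa" using hh_lt unfolding seg_def by blast
      moreover have "|hh ` (T \<inter> seg x)| <o |seg kappa|"
        using card_of_image Tsmall[OF x] by (rule ordLeq_ordLess_trans)
      ultimately obtain J where J: "J < kappa" "\<forall>y\<in>hh ` (T \<inter> seg x). y \<le> J" using kappa_reg by blast
      define q where "q j = (SOME p. p \<in> DD j \<and> x < p)" for j
      have q: "q j \<in> DD j \<and> x < q j" if "j \<le> J" for j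
      proof -
        have "j < kappa" using that J(1) by (meson le_less_trans)
        hence "\<exists>p. p \<in> DD j \<and> x < p" using DDu x by blast
        thus ?thesis unfolding q_def by (rule someI_ex)
      qed
      obtain t where t: "t \<in> T" "x < t" using Tclub x unfolding club_below_def by blast
      define Q where "Q = {t} \<union> q ` {j. j \<le> J}"
      have "Q \<subseteq> seg d"
      proof
        fix z assume "z \<in> Q"
        then consider "z = t" | j where "j \<le> J" "z = q j" unfolding Q_def by blast
        thus "z \<in> seg d"
        proof cases
          case 1 thus ?thesis using t Ts by blast
        next
          case 2
          have "j < kappa" using 2 J(1) by (meson le_less_trans)
          thus ?thesis using q[OF 2(1)] DDs 2(2) by blast
        qed
      qed
      moreover have "|Q| <o |seg kappa|" unfolding Q_def
      proof (rule card_of_Un_ordLess_infinite[OF kinf])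
        show "|{t}| <o |seg kappa|" using kinf by (simp add: finite_less_inf)
        show "|q ` {j. j \<le> J}| <o |seg kappa|" using card_of_image le_small[OF J(1)] by (rule ordLeq_ordLess_trans)
      qed
      ultimately obtain y where y: "y < d" "\<forall>z\<in>Q. z < y" using small_bounded_k[OF cfd] by blast
      have "?R x y"
      proof (intro conjI ballI allI impI)
        show "\<exists>t\<in>T. x<t \<and> t<y" using t y unfolding Q_def by blast
      next
        fix ga j assume ga: "ga \<in> T" "ga < x" "j \<le> hh ga"
        have "hh ga \<le> J" using J(2) ga unfolding seg_def by blast
        hence jJ: "j \<le> J" using ga(3) by simp
        have "q j \<in> Q" unfolding Q_def using jJ by blast
        thus "\<exists>p\<in>DD j. x<p \<and> p<y" using q[OF jJ] y by blast
      qed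
      moreover have "x < y" using t y unfolding Q_def by (meson UnI1 insertI1 less_trans)
      ultimately show "\<exists>y<d. x < y \<and> ?R x y" using y(1) by blast
    qed
    then obtain s e where se: "s 0 = b" "\<forall>n. s n < s (Suc n) \<and> ?R (s n) (s (Suc n))" "e < d"
      "\<forall>n. s n < e" "\<forall>b'<e. \<exists>n. b'<s n" by blast
    have smono: "s n \<le> s m" if "n \<le> m" for n m
      using lift_Suc_mono_le[of s n m] se(2) that less_imp_le by blast
    have "limpt T e" unfolding limpt_def
    proof (intro conjI allI impI)
      obtain t where "t\<in>T" "t < s (Suc 0)" using se(2) by blast
      thus "\<exists>x\<in>T. x < e" using se(4) by (meson less_trans)
    next
      fix b' assume "b' < e"
      then obtain n where n: "b' < s n" using se by blast
      obtain t where "t\<in>T" "s n < t" "t < s (Suc n)" using se(2) by blast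
      thus "\<exists>x\<in>T. b' < x \<and> x < e" using se(4) n by (meson less_trans)
    qed
    hence eT: "e \<in> T" using club_limpt[OF Tclub se(3)] by blast
    have "\<forall>ga\<in>T. ga<e \<longrightarrow> (\<forall>j. j \<le> hh ga \<longrightarrow> e \<in> DD j)"
    proof (intro ballI allI impI)
      fix ga j assume ga: "ga \<in> T" "ga < e" "j \<le> hh ga"
      have j: "j < kappa" using ga(3) hh_lt by (meson le_less_trans)
      obtain n0 where n0: "ga < s n0" using se(5) ga(2) by blast
      have P: "\<exists>p\<in>DD j. s m < p \<and> p < s (Suc m)" if "n0 \<le> m" for m
      proof -
        have "ga < s m" using n0 smono[OF that] by (meson less_le_trans)
        thus ?thesis using se(2) ga(1,3) by blast
      qed
      have "limpt (DD j) e" unfolding limpt_def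
      proof (intro conjI allI impI)
        obtain p where "p\<in>DD j" "p < s (Suc n0)" using P[of n0] by blast
        thus "\<exists>p\<in>DD j. p < e" using se(4) by (meson less_trans)
      next
        fix b' assume "b' < e"
        then obtain n1 where n1: "b' < s n1" using se(5) by blast
        have "b' < s (max n0 n1)" using n1 smono[of n1 "max n0 n1"] by (meson less_le_trans max.cobounded2)
        moreover obtain p where "p\<in>DD j" "s (max n0 n1) < p" "p < s (Suc (max n0 n1))" using P[of "max n0 n1"] by auto
        ultimately show "\<exists>p\<in>DD j. b' < p \<and> p < e" using se(4) by (meson less_trans)
      qed
      thus "e \<in> DD j" using DDl j se(3) by blast
    qed
    hence "e \<in> C" unfolding C_def using eT by blast
    moreover have "b < e" using se by metis
    ultimately show "\<exists>c\<in>C. b < c" by blast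
  qed
  show ?thesis using Cclub mono by blast
qed
end

lemma main:
  shows "\<exists>a :: 'a \<Rightarrow> 'a \<Rightarrow> 'a set.
     (\<forall>al. \<forall>i<kappa. a al i \<subseteq> seg al \<and> card_of (a al i) <=o card_of (seg (mus i)))
   \<and> (\<forall>al i j. i \<le> j \<and> j < kappa \<longrightarrow> a al i \<subseteq> a al j)
   \<and> (\<forall>f :: 'a \<Rightarrow> 'a.
        (\<forall>i j. i \<le> j \<and> j < kappa \<longrightarrow> Aset a f i \<subseteq> Aset a f j)
      \<and> \<not> stationary ({d. cf d \<noteq> kappa} - (\<Union>i\<in>seg kappa. Aset a f i))
      \<and> (\<forall>g i. \<not> countable (seg (cf g)) \<and> cf g \<le> kappa \<and> i < kappa
              \<and> reflects (Aset a f i) g \<longrightarrow> g \<in> Aset a f i)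
      \<and> (\<forall>i<kappa. \<forall>d \<in> Scof kappa - (\<Union>i\<in>seg kappa. Aset a f i).
              \<not> reflects (Aset a f i) d)
      \<and> (\<exists>N. \<not> stationary N
              \<and> (Scof kappa - (\<Union>i\<in>seg kappa. Aset a f i)) - N \<in> Ideal_I kappa))"
proof (rule exI[of _ aa], intro conjI allI impI)
  fix al i assume "i < kappa"
  thus "aa al i \<subseteq> seg al" "|aa al i| \<le>o |seg (mus i)|" using aa_sub aa_card by auto
next
  fix al i j assume "i \<le> j \<and> j < kappa"
  thus "aa al i \<subseteq> aa al j" using aa_mono by blast
next
  fix f :: "'a \<Rightarrow> 'a" and i j assume "i \<le> j \<and> j < kappa"
  thus "Aset aa f i \<subseteq> Aset aa f j" using AA_mono[of i j f] unfolding AA_def by blast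
next
  fix f :: "'a \<Rightarrow> 'a"
  have disj: "({d. cf d \<noteq> kappa} - (\<Union>i\<in>seg kappa. Aset aa f i)) \<inter> EE f = {}"
  proof (rule ccontr)
    assume "({d. cf d \<noteq> kappa} - (\<Union>i\<in>seg kappa. Aset aa f i)) \<inter> EE f \<noteq> {}"
    then obtain d where d: "cf d \<noteq> kappa" "d \<notin> (\<Union>i\<in>seg kappa. Aset aa f i)" "d \<in> EE f" by blast
    obtain i where "i<kappa" "d \<in> AA f i" using B_main[OF d(3) d(1)] by blast
    thus False using d(2) unfolding AA_def seg_def by blast
  qed
  show "\<not> stationary ({d. cf d \<noteq> kappa} - (\<Union>i\<in>seg kappa. Aset aa f i))"
    unfolding stationary_def using EE_club[of f] disj by blast
next
  fix f :: "'a \<Rightarrow> 'a" and g i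
  assume "\<not> countable (seg (cf g)) \<and> cf g \<le> kappa \<and> i < kappa \<and> reflects (Aset aa f i) g"
  thus "g \<in> Aset aa f i" using C_main[of g i f] unfolding AA_def by blast
next
  fix f :: "'a \<Rightarrow> 'a" and i
  assume i: "i < kappa"
  show "\<forall>d \<in> Scof kappa - (\<Union>i\<in>seg kappa. Aset aa f i). \<not> reflects (Aset aa f i) d"
  proof (intro ballI notI)
    fix d assume d: "d \<in> Scof kappa - (\<Union>i\<in>seg kappa. Aset aa f i)"
    assume r: "reflects (Aset aa f i) d"
    have cfd: "cf d = kappa" using d unfolding Scof_def by blast
    hence "\<not> countable (seg (cf d))" using kappa_unc by simp
    hence "d \<in> AA f i" using C_main[of d i f] r i cfd unfolding AA_def by simp
    thus False using d i unfolding AA_def seg_def by blast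
  qed
next
  fix f :: "'a \<Rightarrow> 'a"
  let ?N = "- EE f"
  have "\<not> stationary ?N" unfolding stationary_def using EE_club[of f] by blast
  moreover have "(Scof kappa - (\<Union>i\<in>seg kappa. Aset aa f i)) - ?N \<in> Ideal_I kappa"
    unfolding Ideal_I_def
  proof (intro CollectI exI[of _ "hh f"] conjI allI ballI)
    fix x show "hh f x < kappa" by (rule hh_lt)
  next
    fix d assume "d \<in> (Scof kappa - (\<Union>i\<in>seg kappa. Aset aa f i) - ?N) \<inter> Scof kappa"
    hence cfd: "cf d = kappa" and dE: "d \<in> EE f" and nA: "\<forall>i<kappa. d \<notin> AA f i"
      unfolding Scof_def AA_def seg_def by auto
    show "\<exists>C. club_below d C \<and> strict_mono_on C (hh f)" by (rule D_main[OF cfd dE nA])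
  qed
  ultimately show "\<exists>N. \<not> stationary N \<and> (Scof kappa - (\<Union>i\<in>seg kappa. Aset aa f i)) - N \<in> Ideal_I kappa"
    by blast
qed

end

theorem lemma2p7:
  fixes mu kappa :: "'a::wellorder" and mus :: "'a \<Rightarrow> 'a"
  assumes mu_card: "is_cardinal mu"
    and lambda_succ: "\<forall>x::'a. card_of (seg x) <=o card_of (seg mu)"
    and lambda_big: "card_of (seg mu) <o card_of (UNIV :: 'a set)"
    and kappa_cf: "kappa = cf mu"
    and kappa_unc: "\<not> countable (seg kappa)"
    and kappa_lt: "kappa < mu"
    and mus_card: "\<forall>i<kappa. is_cardinal (mus i)"
    and mus_incr: "\<forall>i j. i < j \<and> j < kappa \<longrightarrow> mus i < mus j"
    and mus_cont: "\<forall>j<kappa. is_limit j \<longrightarrow> (\<forall>b < mus j. \<exists>i<j. b < mus i)"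
    and mus0: "kappa < mus ord0"
    and mu_sum: "card_of (seg mu) =o card_of (SIGMA i:seg kappa. seg (mus i))"
  shows "\<exists>a :: 'a \<Rightarrow> 'a \<Rightarrow> 'a set.
     (\<forall>al. \<forall>i<kappa. a al i \<subseteq> seg al \<and> card_of (a al i) <=o card_of (seg (mus i)))
   \<and> (\<forall>al i j. i \<le> j \<and> j < kappa \<longrightarrow> a al i \<subseteq> a al j)
   \<and> (\<forall>f :: 'a \<Rightarrow> 'a.
        (\<forall>i j. i \<le> j \<and> j < kappa \<longrightarrow> Aset a f i \<subseteq> Aset a f j)
      \<and> \<not> stationary ({d. cf d \<noteq> kappa} - (\<Union>i\<in>seg kappa. Aset a f i))
      \<and> (\<forall>g i. \<not> countable (seg (cf g)) \<and> cf g \<le> kappa \<and> i < kappa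
              \<and> reflects (Aset a f i) g \<longrightarrow> g \<in> Aset a f i)
      \<and> (\<forall>i<kappa. \<forall>d \<in> Scof kappa - (\<Union>i\<in>seg kappa. Aset a f i).
              \<not> reflects (Aset a f i) d)
      \<and> (\<exists>N. \<not> stationary N
              \<and> (Scof kappa - (\<Union>i\<in>seg kappa. Aset a f i)) - N \<in> Ideal_I kappa))"
proof -
  interpret L: L27 mu kappa mus
    by (rule L27.intro[OF lambda_succ lambda_big kappa_cf kappa_unc kappa_lt mus_incr mus0 mu_sum])
  show ?thesis by (rule L.main)
qed

end
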